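(* For all positive integers $a,b$, the Aztec rectangle $\mathcal{AR}_{a,b}$ (with no defects) has no 180-cover.
   Context: A cell is a unit square $[i,i+1]\times[j,j+1]$ with $i,j\in\mathbb{Z}$, labelled $(i,j)$. The right-oriented trominoes are the translates of $\{(0,0),(1,0),(1,1)\}$ and of $\{(0,0),(0,1),(1,1)\}$; the left-oriented trominoes are the translates of $\{(0,1),(1,0),(1,1)\}$ and of $\{(0,0),(0,1),(1,0)\}$. A 180-cover of a region $R$ is a partition of $R$ into trominoes which are either all right-oriented or all left-oriented. For positive integers $a,b$, the Aztec rectangle $\mathcal{AR}_{a,b}$ is (up to translation) the region consisting of the cells $(i,j)\in\mathbb{Z}^2$ with $0\le i+j\le 2b$ and $1\le j-i\le 2a+1$. *)

theory Defs
  imports Main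
begin

type_synonym cell = "int \<times> int"

definition translate :: "cell \<Rightarrow> cell set \<Rightarrow> cell set" where
  "translate v S = (\<lambda>(i,j). (i + fst v, j + snd v)) ` S"

definition right_trominoes :: "cell set set" where
  "right_trominoes = {translate v {(0,0),(1,0),(1,1)} | v. True}
                   \<union> {translate v {(0,0),(0,1),(1,1)} | v. True}"

definition left_trominoes :: "cell set set" where
  "left_trominoes = {translate v {(0,1),(1,0),(1,1)} | v. True}
                  \<union> {translate v {(0,0),(0,1),(1,0)} | v. True}"

definition is_partition_into :: "cell set set \<Rightarrow> cell set \<Rightarrow> bool" where
  "is_partition_into P R \<longleftrightarrow> \<Union>P = R \<and> (\<forall>A\<in>P. \<forall>B\<in>P. A \<noteq> B \<longrightarrow> A \<inter> B = {})"

definition cover180 :: "cell set \<Rightarrow> cell set set \<Rightarrow> bool" where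
  "cover180 R P \<longleftrightarrow> is_partition_into P R \<and> (P \<subseteq> right_trominoes \<or> P \<subseteq> left_trominoes)"

definition aztec_rectangle :: "nat \<Rightarrow> nat \<Rightarrow> cell set" where
  "aztec_rectangle a b = {(i,j). 0 \<le> i + j \<and> i + j \<le> 2 * int b \<and> 1 \<le> j - i \<and> j - i \<le> 2 * int a + 1}"

end

theory Submission
  imports Defs
begin

definition zero3 :: "(int \<Rightarrow> int) \<Rightarrow> bool" where
  "zero3 f \<longleftrightarrow> (\<forall>s. f (s mod 3) + f ((s+1) mod 3) + f ((s+2) mod 3) = 0)"

definition f1 :: "int \<Rightarrow> int" where
  "f1 r = (if r = 0 then 1 else if r = 1 then -1 else 0)"

definition f2 :: "int \<Rightarrow> int" where
  "f2 r = (if r = 0 then 0 else if r = 1 then 1 else -1)"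

lemma mod3_cases: "(s::int) mod 3 = 0 \<or> s mod 3 = 1 \<or> s mod 3 = 2" by presburger

lemma zero3_f1: "zero3 f1"
  unfolding zero3_def f1_def
proof
  fix s :: int
  consider "s mod 3 = 0" | "s mod 3 = 1" | "s mod 3 = 2" using mod3_cases by blast
  then show "(if s mod 3 = 0 then 1 else if s mod 3 = 1 then -1 else 0) +
         (if (s + 1) mod 3 = 0 then 1 else if (s + 1) mod 3 = 1 then -1 else 0) +
         (if (s + 2) mod 3 = 0 then 1 else if (s + 2) mod 3 = 1 then -1 else (0::int)) = 0"
    by cases (simp_all add: mod_add_left_eq[symmetric])
qed

lemma zero3_f2: "zero3 f2"
  unfolding zero3_def f2_def
proof
  fix s :: int
  consider "s mod 3 = 0" | "s mod 3 = 1" | "s mod 3 = 2" using mod3_cases by blast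
  then show "(if s mod 3 = 0 then 0 else if s mod 3 = 1 then 1 else -1) +
         (if (s + 1) mod 3 = 0 then 0 else if (s + 1) mod 3 = 1 then 1 else -1) +
         (if (s + 2) mod 3 = 0 then 0 else if (s + 2) mod 3 = 1 then 1 else (-1::int)) = 0"
    by cases (simp_all add: mod_add_left_eq[symmetric])
qed

definition G :: "nat \<Rightarrow> nat \<Rightarrow> (int \<Rightarrow> int) \<Rightarrow> int" where
  "G a b f = (\<Sum>u\<in>{0..2*b}. f (int u mod 3) * (int a + int (u mod 2)))"

lemma G_Suc: "G a (Suc b) f = G a b f + f ((2*int b+1) mod 3) * (int a + 1) + f ((2*int b+2) mod 3) * int a"
proof -
  have "2 * Suc b = Suc (Suc (2*b))" by simp
  moreover have "Suc (2*b) mod 2 = 1" by presburger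
  ultimately show ?thesis unfolding G_def
    by (simp add: algebra_simps)
qed

lemma G_period: assumes "zero3 f" shows "G a (b+3) f = G a b f"
proof -
  have z: "f (s mod 3) + f ((s+1) mod 3) + f ((s+2) mod 3) = 0" for s
    using assms unfolding zero3_def by blast
  let ?s = "2 * int b + 1"
  have "G a (b+3) f = G a b f + (2*int a + 1) * (f (?s mod 3) + f ((?s+1) mod 3) + f ((?s+2) mod 3))"
  proof -
    have e1: "(2 * int (Suc b) + 1) mod 3 = (?s + 2) mod 3" by presburger
    have e2: "(2 * int (Suc b) + 2) mod 3 = ?s mod 3" by presburger
    have e3: "(2 * int (Suc (Suc b)) + 1) mod 3 = (?s + 1) mod 3" by presburger
    have e4: "(2 * int (Suc (Suc b)) + 2) mod 3 = (?s + 2) mod 3" by presburger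
    have e5: "(2 * int b + 2) mod 3 = (?s + 1) mod 3" by presburger
    have "b + 3 = Suc (Suc (Suc b))" by simp
    then have "G a (b+3) f = G a b f + f ((2*int b+1) mod 3) * (int a + 1) + f ((2*int b+2) mod 3) * int a
      + f ((2*int (Suc b)+1) mod 3) * (int a + 1) + f ((2*int (Suc b)+2) mod 3) * int a
      + f ((2*int (Suc (Suc b))+1) mod 3) * (int a + 1) + f ((2*int (Suc (Suc b))+2) mod 3) * int a"
      by (simp only: G_Suc)
    also have "\<dots> = G a b f + (2*int a + 1) * (f (?s mod 3) + f ((?s+1) mod 3) + f ((?s+2) mod 3))"
      unfolding e1 e2 e3 e4 e5 by (simp add: algebra_simps)
    finally show ?thesis .
  qed
  moreover have "f (?s mod 3) + f ((?s+1) mod 3) + f ((?s+2) mod 3) = 0" by (rule z)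
  ultimately show ?thesis by (simp only: mult_zero_right add_0_right)
qed

lemma G_nonzero: assumes "a > 0" shows "G a b f1 \<noteq> 0 \<or> G a b f2 \<noteq> 0"
proof (induction b rule: less_induct)
  case (less b)
  show ?case
  proof (cases "b < 3")
    case True
    then have "b = 0 \<or> b = 1 \<or> b = 2" by auto
    then show ?thesis using assms
      by (auto simp: G_def f1_def f2_def numeral_eq_Suc)
  next
    case False
    then obtain c where c: "b = c + 3" "c < b" by (metis add.commute le_add_diff_inverse less_diff_conv not_less zero_less_numeral add_less_cancel_left add_0_right)
    then show ?thesis using less[of c] G_period[OF zero3_f1] G_period[OF zero3_f2] by simp
  qed
qed

lemma finite_AR: "finite (aztec_rectangle a b)"
proof -
  have "aztec_rectangle a b \<subseteq> {-int a - 1..int b} \<times> {0..int a + int b + 1}"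
    unfolding aztec_rectangle_def by auto
  then show ?thesis by (rule finite_subset) auto
qed

lemma slice_R: "{c \<in> aztec_rectangle a b. nat (fst c + snd c) = u} =
   (\<lambda>i. (i, int u - i)) ` {(int u - 2*int a) div 2 .. (int u - 1) div 2}" if "u \<le> 2*b"
proof (rule set_eqI)
  fix c :: cell
  obtain i j where c: "c = (i,j)" by fastforce
  have "(i,j) \<in> {c \<in> aztec_rectangle a b. nat (fst c + snd c) = u} \<longleftrightarrow>
        (i \<in> {(int u - 2*int a) div 2 .. (int u - 1) div 2} \<and> j = int u - i)"
    unfolding aztec_rectangle_def using that by auto
  then show "c \<in> {c \<in> aztec_rectangle a b. nat (fst c + snd c) = u} \<longleftrightarrow>
     c \<in> (\<lambda>i. (i, int u - i)) ` {(int u - 2*int a) div 2 .. (int u - 1) div 2}"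
    unfolding c by auto
qed

lemma card_slice_R: "card {c \<in> aztec_rectangle a b. nat (fst c + snd c) = u} = a + u mod 2"
  if "u \<le> 2*b"
proof -
  have "inj_on (\<lambda>i. (i, int u - i)) A" for A by (auto intro: inj_onI)
  then have "card {c \<in> aztec_rectangle a b. nat (fst c + snd c) = u} =
     nat ((int u - 1) div 2 - (int u - 2*int a) div 2 + 1)"
    unfolding slice_R[OF that] by (simp add: card_image)
  also have "\<dots> = a + u mod 2"
  proof -
    have "(int u - 1) div 2 - (int u - 2*int a) div 2 + 1 = int a + int (u mod 2)" by (simp add: of_nat_mod) presburger
    then show ?thesis by (simp add: nat_add_distrib)
  qed
  finally show ?thesis .
qed

lemma slice_L: "{c \<in> aztec_rectangle a b. nat (snd c - fst c - 1) = v} =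
   (\<lambda>i. (i, i + int v + 1)) ` {(- int v) div 2 .. (2*int b - int v - 1) div 2}" if "v \<le> 2*a"
proof (rule set_eqI)
  fix c :: cell
  obtain i j where c: "c = (i,j)" by fastforce
  have "(i,j) \<in> {c \<in> aztec_rectangle a b. nat (snd c - fst c - 1) = v} \<longleftrightarrow>
        (i \<in> {(- int v) div 2 .. (2*int b - int v - 1) div 2} \<and> j = i + int v + 1)"
    unfolding aztec_rectangle_def using that by auto
  then show "c \<in> {c \<in> aztec_rectangle a b. nat (snd c - fst c - 1) = v} \<longleftrightarrow>
     c \<in> (\<lambda>i. (i, i + int v + 1)) ` {(- int v) div 2 .. (2*int b - int v - 1) div 2}"
    unfolding c by auto
qed

lemma card_slice_L: "card {c \<in> aztec_rectangle a b. nat (snd c - fst c - 1) = v} = b + v mod 2"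
  if "v \<le> 2*a"
proof -
  have "inj_on (\<lambda>i. (i, i + int v + 1)) A" for A by (auto intro: inj_onI)
  then have "card {c \<in> aztec_rectangle a b. nat (snd c - fst c - 1) = v} =
     nat ((2*int b - int v - 1) div 2 - (- int v) div 2 + 1)"
    unfolding slice_L[OF that] by (simp add: card_image)
  also have "\<dots> = b + v mod 2"
  proof -
    have "(2*int b - int v - 1) div 2 - (- int v) div 2 + 1 = int b + int (v mod 2)" by (simp add: of_nat_mod) presburger
    then show ?thesis by (simp add: nat_add_distrib)
  qed
  finally show ?thesis .
qed

lemma sum_R: "(\<Sum>c\<in>aztec_rectangle a b. f ((fst c + snd c) mod 3)) = G a b f"
proof -
  let ?R = "aztec_rectangle a b"
  let ?w = "\<lambda>c. f ((fst c + snd c) mod 3)"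
  have "(\<Sum>c\<in>?R. ?w c) = (\<Sum>u\<in>{0..2*b}. \<Sum>c\<in>{c \<in> ?R. nat (fst c + snd c) = u}. ?w c)"
    by (rule sum.group[OF finite_AR, symmetric]) (auto simp: aztec_rectangle_def)
  also have "\<dots> = (\<Sum>u\<in>{0..2*b}. f (int u mod 3) * (int a + int (u mod 2)))"
  proof (rule sum.cong[OF refl])
    fix u assume u: "u \<in> {0..2*b}"
    have "(\<Sum>c\<in>{c \<in> ?R. nat (fst c + snd c) = u}. ?w c) = (\<Sum>c\<in>{c \<in> ?R. nat (fst c + snd c) = u}. f (int u mod 3))"
      by (rule sum.cong) (auto simp: aztec_rectangle_def)
    also have "\<dots> = f (int u mod 3) * (int a + int (u mod 2))"
      using card_slice_R[of u b a] u by simp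
    finally show "(\<Sum>c\<in>{c \<in> ?R. nat (fst c + snd c) = u}. ?w c) = f (int u mod 3) * (int a + int (u mod 2))" .
  qed
  finally show ?thesis unfolding G_def .
qed

lemma sum_L: "(\<Sum>c\<in>aztec_rectangle a b. f ((snd c - fst c - 1) mod 3)) = G b a f"
proof -
  let ?R = "aztec_rectangle a b"
  let ?w = "\<lambda>c. f ((snd c - fst c - 1) mod 3)"
  have "(\<Sum>c\<in>?R. ?w c) = (\<Sum>u\<in>{0..2*a}. \<Sum>c\<in>{c \<in> ?R. nat (snd c - fst c - 1) = u}. ?w c)"
    by (rule sum.group[OF finite_AR, symmetric]) (auto simp: aztec_rectangle_def)
  also have "\<dots> = (\<Sum>u\<in>{0..2*a}. f (int u mod 3) * (int b + int (u mod 2)))"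
  proof (rule sum.cong[OF refl])
    fix u assume u: "u \<in> {0..2*a}"
    have "(\<Sum>c\<in>{c \<in> ?R. nat (snd c - fst c - 1) = u}. ?w c) = (\<Sum>c\<in>{c \<in> ?R. nat (snd c - fst c - 1) = u}. f (int u mod 3))"
      by (rule sum.cong) (auto simp: aztec_rectangle_def)
    also have "\<dots> = f (int u mod 3) * (int b + int (u mod 2))"
      using card_slice_L[of u a b] u by simp
    finally show "(\<Sum>c\<in>{c \<in> ?R. nat (snd c - fst c - 1) = u}. ?w c) = f (int u mod 3) * (int b + int (u mod 2))" .
  qed
  finally show ?thesis unfolding G_def .
qed

lemma tile_R: assumes "zero3 f" "t \<in> right_trominoes"
  shows "(\<Sum>c\<in>t. f ((fst c + snd c) mod 3)) = 0"
proof -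
  have z: "f (s mod 3) + f ((s+1) mod 3) + f ((s+2) mod 3) = 0" for s
    using assms(1) unfolding zero3_def by blast
  from assms(2) obtain x y where
    "t = {(x,y),(x+1,y),(x+1,y+1)} \<or> t = {(x,y),(x,y+1),(x+1,y+1)}"
    unfolding right_trominoes_def translate_def by (auto simp: add.commute)
  then show ?thesis
  proof
    assume t: "t = {(x,y),(x+1,y),(x+1,y+1)}"
    have "(\<Sum>c\<in>t. f ((fst c + snd c) mod 3)) = f ((x+y) mod 3) + f ((x+y+1) mod 3) + f ((x+y+2) mod 3)"
      unfolding t by (simp add: algebra_simps)
    then show ?thesis using z by simp
  next
    assume t: "t = {(x,y),(x,y+1),(x+1,y+1)}"
    have "(\<Sum>c\<in>t. f ((fst c + snd c) mod 3)) = f ((x+y) mod 3) + f ((x+y+1) mod 3) + f ((x+y+2) mod 3)"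
      unfolding t by (simp add: algebra_simps)
    then show ?thesis using z by simp
  qed
qed

lemma tile_L: assumes "zero3 f" "t \<in> left_trominoes"
  shows "(\<Sum>c\<in>t. f ((snd c - fst c - 1) mod 3)) = 0"
proof -
  have z: "f (s mod 3) + f ((s+1) mod 3) + f ((s+2) mod 3) = 0" for s
    using assms(1) unfolding zero3_def by blast
  from assms(2) obtain x y where
    "t = {(x,y+1),(x+1,y),(x+1,y+1)} \<or> t = {(x,y),(x,y+1),(x+1,y)}"
    unfolding left_trominoes_def translate_def by (auto simp: add.commute)
  then show ?thesis
  proof
    assume t: "t = {(x,y+1),(x+1,y),(x+1,y+1)}"
    have "(\<Sum>c\<in>t. f ((snd c - fst c - 1) mod 3)) = f ((y-x-2) mod 3) + f ((y-x-2+1) mod 3) + f ((y-x-2+2) mod 3)"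
      unfolding t by (simp add: algebra_simps)
    then show ?thesis using z[of "y-x-2"] by linarith
  next
    assume t: "t = {(x,y),(x,y+1),(x+1,y)}"
    have "(\<Sum>c\<in>t. f ((snd c - fst c - 1) mod 3)) = f ((y-x-2) mod 3) + f ((y-x-2+1) mod 3) + f ((y-x-2+2) mod 3)"
      unfolding t by (simp add: algebra_simps)
    then show ?thesis using z[of "y-x-2"] by linarith
  qed
qed

lemma partition_sum: assumes "is_partition_into P R" "finite R"
  shows "sum w R = (\<Sum>t\<in>P. sum w t)"
proof -
  have U: "\<Union>P = R" and D: "\<forall>A\<in>P. \<forall>B\<in>P. A \<noteq> B \<longrightarrow> A \<inter> B = {}"
    using assms(1) unfolding is_partition_into_def by auto
  have F: "\<forall>A\<in>P. finite A" using U assms(2) by (auto intro: finite_subset)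
  show ?thesis using sum.Union_disjoint[OF F D, of w] U by simp
qed

theorem theorem5:
  fixes a b :: nat
  assumes "a > 0" and "b > 0"
  shows "\<not> (\<exists>P. cover180 (aztec_rectangle a b) P)"
proof
  assume "\<exists>P. cover180 (aztec_rectangle a b) P"
  then obtain P where part: "is_partition_into P (aztec_rectangle a b)"
    and or: "P \<subseteq> right_trominoes \<or> P \<subseteq> left_trominoes"
    unfolding cover180_def by blast
  from or show False
  proof
    assume sub: "P \<subseteq> right_trominoes"
    have "G a b f = 0" if "zero3 f" for f
    proof -
      have "G a b f = (\<Sum>t\<in>P. \<Sum>c\<in>t. f ((fst c + snd c) mod 3))"
        unfolding sum_R[symmetric] by (rule partition_sum[OF part finite_AR])
      also have "\<dots> = 0" using tile_R[OF that] sub by (intro sum.neutral) auto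
      finally show ?thesis .
    qed
    then show False using G_nonzero[OF assms(1), of b] zero3_f1 zero3_f2 by blast
  next
    assume sub: "P \<subseteq> left_trominoes"
    have "G b a f = 0" if "zero3 f" for f
    proof -
      have "G b a f = (\<Sum>t\<in>P. \<Sum>c\<in>t. f ((snd c - fst c - 1) mod 3))"
        unfolding sum_L[symmetric] by (rule partition_sum[OF part finite_AR])
      also have "\<dots> = 0" using tile_L[OF that] sub by (intro sum.neutral) auto
      finally show ?thesis .
    qed
    then show False using G_nonzero[OF assms(2), of a] zero3_f1 zero3_f2 by blast
  qed
qed

end
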